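(* Let $\alpha,\beta>1$ with $\alpha+\beta\leqslant4$, let $V,W$ satisfy (H1)–(H2), and let $T=\sqrt{\frac{2(\alpha+\beta)(D+1)}{\alpha+\beta-2}}$. Then there exists $b_*\in(0,b^* )$ such that for any $\lambda\geqslant1$ and any $b_1,b_2>0$ with $b_1+b_2\in(0,b_* )$, if $\{z_n\}\subset E_\lambda$ is a $(\mathrm{PS})_{c^T_{\mathbf b,\lambda}}$ sequence of $\mathcal{J}^T_{\mathbf b,\lambda}$ (i.e. $\mathcal{J}^T_{\mathbf b,\lambda}(z_n)\to c^T_{\mathbf b,\lambda}$ and $\|(\mathcal{J}^T_{\mathbf b,\lambda})'(z_n)\|_{E_\lambda^*}\to0$), then, up to a subsequence, $\|z_n\|_\lambda\leqslant T$.
   Context: (H1) $V,W\in C(\mathbb{R}^3,[0,\infty))$; $\Omega_1=\operatorname{int}V^{-1}(0)$, $\Omega_2=\operatorname{int}W^{-1}(0)$ have smooth boundaries, $\overline{\Omega}_1=V^{-1}(0)$, $\overline{\Omega}_2=W^{-1}(0)$, $\Omega_1\cap\Omega_2\neq\emptyset$. (H2) There is $c>0$ with $\{x: V(x)W(x)\leqslant c^2\}$ of finite positive Lebesgue measure. $E=E_V\times E_W$, $E_V=\{u\in\mathcal{D}^{1,2}(\mathbb{R}^3):\int Vu^2<\infty\}$, $E_W$ analogous; $E_\lambda$ is $E$ with norm $\|z\|_\lambda^2=\int(|\nabla u|^2+|\nabla v|^2+\lambda Vu^2+\lambda Wv^2)$. $\mathcal{J}^T_{\mathbf b,\lambda}(z)=\frac12\|z\|_\lambda^2+\frac14\xi(\|z\|_\lambda^2/T^2)(b_1\|\nabla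 u\|_2^4+b_2\|\nabla v\|_2^4)-\frac{1}{\alpha+\beta}\int|u^+|^\alpha|v^+|^\beta dx$, with $\xi\in C^\infty([0,\infty),[0,1])$, $\xi=1$ on $[0,1]$, $\xi=0$ on $[2,\infty)$, $\xi'\leqslant0$, $\|\xi'\|_\infty\leqslant2$. $e_0\in C_0^\infty(\Omega_1\cap\Omega_2)$ with $e_0^+\not\equiv0$ and $b^*>0$ are such that $\mathcal{J}^T_{\mathbf b,\lambda}((e_0,e_0))<0$ for all $T,\lambda>0$ and $b_1+b_2\in(0,b^* )$; $c^T_{\mathbf b,\lambda}=\inf_{\gamma\in\Gamma}\max_{t\in[0,1]}\mathcal{J}^T_{\mathbf b,\lambda}(\gamma(t))$ with $\Gamma=\{\gamma\in C([0,1],E_\lambda):\gamma(0)=0,\gamma(1)=(e_0,e_0)\}$. $D>0$ is a constant, independent of $b_1,b_2,T,\lambda$, with $c^T_{\mathbf b,\lambda}\leqslant D$ for all $\lambda\geqslant1$, $T>0$, $b_1+b_2\in(0,b^* )$. *)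

theory Defs
  imports "HOL-Analysis.Analysis"
begin

type_synonym pt = "real^3"
type_synonym fn3 = "pt \<Rightarrow> real"
type_synonym pairfn = "fn3 \<times> fn3"

definition partial :: "3 \<Rightarrow> fn3 \<Rightarrow> fn3" where
  "partial i f x = deriv (\<lambda>t. f (x + t *\<^sub>R axis i 1)) 0"

definition smooth3 :: "fn3 \<Rightarrow> bool" where
  "smooth3 f \<longleftrightarrow> (\<exists>Df :: 3 list \<Rightarrow> fn3. Df [] = f \<and>
      (\<forall>is. continuous_on UNIV (Df is)) \<and>
      (\<forall>is i x. ((\<lambda>t. Df is (x + t *\<^sub>R axis i 1)) has_real_derivative Df (i # is) x) (at 0)))"

definition smooth_real_on_with :: "real set \<Rightarrow> (real \<Rightarrow> real) \<Rightarrow> (nat \<Rightarrow> real \<Rightarrow> real) \<Rightarrow> bool" where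
  "smooth_real_on_with S f F \<longleftrightarrow> F 0 = f \<and>
      (\<forall>k. \<forall>x\<in>S. (F k has_real_derivative F (Suc k) x) (at x within S))"

definition test_fn :: "pt set \<Rightarrow> fn3 \<Rightarrow> bool" where
  "test_fn \<Omega> \<phi> \<longleftrightarrow> smooth3 \<phi> \<and> compact (closure {x. \<phi> x \<noteq> 0}) \<and>
      closure {x. \<phi> x \<noteq> 0} \<subseteq> \<Omega>"

definition smooth_boundary :: "pt set \<Rightarrow> bool" where
  "smooth_boundary \<Omega> \<longleftrightarrow> open \<Omega> \<and>
     (\<forall>p\<in>frontier \<Omega>. \<exists>U \<psi>. open U \<and> p \<in> U \<and> smooth3 \<psi> \<and>
        (\<forall>x\<in>U. \<exists>i. partial i \<psi> x \<noteq> 0) \<and> \<Omega> \<inter> U = {x\<in>U. \<psi> x < 0})"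

definition Lp6 :: "fn3 \<Rightarrow> bool" where
  "Lp6 u \<longleftrightarrow> u \<in> borel_measurable lebesgue \<and> integrable lebesgue (\<lambda>x. \<bar>u x\<bar> powr 6)"

definition weak_grad :: "fn3 \<Rightarrow> (pt \<Rightarrow> real^3) \<Rightarrow> bool" where
  "weak_grad u g \<longleftrightarrow> g \<in> borel_measurable lebesgue \<and>
     integrable lebesgue (\<lambda>x. (norm (g x))\<^sup>2) \<and>
     (\<forall>\<phi> i. test_fn UNIV \<phi> \<longrightarrow>
        integral\<^sup>L lebesgue (\<lambda>x. u x * partial i \<phi> x) = - integral\<^sup>L lebesgue (\<lambda>x. g x $ i * \<phi> x))"

text \<open>D^{1,2}(R^3) = {u in L^6 : weak gradient in L^2} (functions, not a.e.-classes).\<close>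
definition D12 :: "fn3 set" where
  "D12 = {u. Lp6 u \<and> (\<exists>g. weak_grad u g)}"

definition grad :: "fn3 \<Rightarrow> pt \<Rightarrow> real^3" where
  "grad u = (SOME g. weak_grad u g)"

definition dir :: "fn3 \<Rightarrow> real" where
  "dir u = integral\<^sup>L lebesgue (\<lambda>x. (norm (grad u x))\<^sup>2)"

definition EV :: "fn3 \<Rightarrow> fn3 set" where
  "EV V = {u \<in> D12. integrable lebesgue (\<lambda>x. V x * (u x)\<^sup>2)}"

definition EE :: "fn3 \<Rightarrow> fn3 \<Rightarrow> pairfn set" where
  "EE V W = EV V \<times> EV W"

definition lnorm :: "fn3 \<Rightarrow> fn3 \<Rightarrow> real \<Rightarrow> pairfn \<Rightarrow> real" where
  "lnorm V W lam z = sqrt (dir (fst z) + dir (snd z)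
      + lam * integral\<^sup>L lebesgue (\<lambda>x. V x * (fst z x)\<^sup>2)
      + lam * integral\<^sup>L lebesgue (\<lambda>x. W x * (snd z x)\<^sup>2))"

definition zadd :: "pairfn \<Rightarrow> pairfn \<Rightarrow> pairfn" where
  "zadd z w = ((\<lambda>x. fst z x + fst w x), (\<lambda>x. snd z x + snd w x))"

definition zscale :: "real \<Rightarrow> pairfn \<Rightarrow> pairfn" where
  "zscale c z = ((\<lambda>x. c * fst z x), (\<lambda>x. c * snd z x))"

definition zzero :: pairfn where
  "zzero = ((\<lambda>x. 0), (\<lambda>x. 0))"

definition JT :: "(real \<Rightarrow> real) \<Rightarrow> real \<Rightarrow> real \<Rightarrow> fn3 \<Rightarrow> fn3 \<Rightarrow> real \<Rightarrow> real \<Rightarrow> real \<Rightarrow> real \<Rightarrow> pairfn \<Rightarrow> real" where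
  "JT \<xi> \<alpha> \<beta> V W T b1 b2 lam z =
     1/2 * (lnorm V W lam z)\<^sup>2
     + 1/4 * \<xi> ((lnorm V W lam z)\<^sup>2 / T\<^sup>2) * (b1 * (dir (fst z))\<^sup>2 + b2 * (dir (snd z))\<^sup>2)
     - 1 / (\<alpha> + \<beta>) * integral\<^sup>L lebesgue
         (\<lambda>x. (max (fst z x) 0) powr \<alpha> * (max (snd z x) 0) powr \<beta>)"

definition cT :: "(real \<Rightarrow> real) \<Rightarrow> real \<Rightarrow> real \<Rightarrow> fn3 \<Rightarrow> fn3 \<Rightarrow> fn3 \<Rightarrow> real \<Rightarrow> real \<Rightarrow> real \<Rightarrow> real \<Rightarrow> real" where
  "cT \<xi> \<alpha> \<beta> V W e0 T b1 b2 lam =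
     (INF \<gamma> \<in> {\<gamma>. (\<forall>t\<in>{0..1}. \<gamma> t \<in> EE V W) \<and>
                 (\<forall>t\<in>{0..1}. \<forall>\<epsilon>>0. \<exists>\<delta>>0. \<forall>s\<in>{0..1}. \<bar>s - t\<bar> < \<delta> \<longrightarrow>
                      lnorm V W lam (zadd (\<gamma> s) (zscale (-1) (\<gamma> t))) < \<epsilon>) \<and>
                 \<gamma> 0 = zzero \<and> \<gamma> 1 = (e0, e0)}.
        (SUP t \<in> {0..1::real}. JT \<xi> \<alpha> \<beta> V W T b1 b2 lam (\<gamma> t)))"

definition is_frechet_deriv :: "fn3 \<Rightarrow> fn3 \<Rightarrow> real \<Rightarrow> (pairfn \<Rightarrow> real) \<Rightarrow> pairfn \<Rightarrow> (pairfn \<Rightarrow> real) \<Rightarrow> bool" where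
  "is_frechet_deriv V W lam J z L \<longleftrightarrow>
     (\<forall>w1\<in>EE V W. \<forall>w2\<in>EE V W. L (zadd w1 w2) = L w1 + L w2) \<and>
     (\<forall>w\<in>EE V W. \<forall>c. L (zscale c w) = c * L w) \<and>
     (\<exists>K. \<forall>w\<in>EE V W. \<bar>L w\<bar> \<le> K * lnorm V W lam w) \<and>
     (\<forall>\<epsilon>>0. \<exists>\<delta>>0. \<forall>w\<in>EE V W. lnorm V W lam w < \<delta> \<longrightarrow>
         \<bar>J (zadd z w) - J z - L w\<bar> \<le> \<epsilon> * lnorm V W lam w)"

definition dual_norm :: "fn3 \<Rightarrow> fn3 \<Rightarrow> real \<Rightarrow> (pairfn \<Rightarrow> real) \<Rightarrow> real" where
  "dual_norm V W lam L = (SUP w \<in> {w \<in> EE V W. lnorm V W lam w \<le> 1}. \<bar>L w\<bar>)"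

definition PS_seq :: "fn3 \<Rightarrow> fn3 \<Rightarrow> real \<Rightarrow> (pairfn \<Rightarrow> real) \<Rightarrow> real \<Rightarrow> (nat \<Rightarrow> pairfn) \<Rightarrow> bool" where
  "PS_seq V W lam J c z \<longleftrightarrow> (\<forall>n. z n \<in> EE V W) \<and>
     (\<lambda>n. J (z n)) \<longlonglongrightarrow> c \<and>
     (\<exists>L. (\<forall>n. is_frechet_deriv V W lam J (z n) (L n)) \<and>
          (\<lambda>n. dual_norm V W lam (L n)) \<longlonglongrightarrow> 0)"

end

theory Submission
  imports Defs "HOL-Computational_Algebra.Polynomial"
begin


definition sm1 :: "(real \<Rightarrow> real) \<Rightarrow> bool" where
  "sm1 f \<longleftrightarrow> (\<exists>F. F 0 = f \<and> (\<forall>n x. (F n has_real_derivative F (Suc n) x) (at x)))"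

lemma sm1_const: "sm1 (\<lambda>x. c)"
  unfolding sm1_def
  by (rule exI[of _ "\<lambda>n x. if n = 0 then c else 0"]) auto

lemma sm1_add: assumes "sm1 f" "sm1 g" shows "sm1 (\<lambda>x. f x + g x)"
proof -
  obtain F where F: "F 0 = f" "\<And>n x. (F n has_real_derivative F (Suc n) x) (at x)"
    using assms(1) unfolding sm1_def by blast
  obtain G where G: "G 0 = g" "\<And>n x. (G n has_real_derivative G (Suc n) x) (at x)"
    using assms(2) unfolding sm1_def by blast
  show ?thesis unfolding sm1_def
    by (rule exI[of _ "\<lambda>n x. F n x + G n x"]) (auto simp: F(1) G(1) intro!: DERIV_add F(2) G(2))
qed

lemma Suc_choose': "Suc n choose k = (n choose k) + (if k = 0 then 0 else (n choose (k-1)))"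
  by (cases k) simp_all

lemma sm1_mult: assumes "sm1 f" "sm1 g" shows "sm1 (\<lambda>x. f x * g x)"
proof -
  obtain F where F: "F 0 = f" "\<And>n x. (F n has_real_derivative F (Suc n) x) (at x)"
    using assms(1) unfolding sm1_def by blast
  obtain G where G: "G 0 = g" "\<And>n x. (G n has_real_derivative G (Suc n) x) (at x)"
    using assms(2) unfolding sm1_def by blast
  define H where "H n x = (\<Sum>i = 0..n. real (n choose i) * F i x * G (n-i) x)" for n x
  have "(H n has_real_derivative H (Suc n) x) (at x)" for n x
  proof -
    have sumeq: "(\<Sum>i = 0..n. real (n choose i) * (F (Suc i) x * G (n-i) x + F i x * G (Suc (n-i)) x))
       = H (Suc n) x"
      unfolding H_def
      apply (simp add: Suc_choose' algebra_simps sum.distrib)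
      apply (subst (4) sum_Suc_reindex)
      apply (auto simp: algebra_simps Suc_diff_le intro: sum.cong)
      done
    have "(H n has_real_derivative (\<Sum>i = 0..n. real (n choose i) * (F (Suc i) x * G (n-i) x + F i x * G (Suc (n-i)) x))) (at x)"
      unfolding H_def
      apply (rule DERIV_sum)
      apply (subst mult.assoc)
      apply (rule DERIV_cmult)
      apply (rule DERIV_mult[OF F(2) G(2), THEN DERIV_cong])
      apply (simp add: algebra_simps Suc_diff_le)
      done
    then show ?thesis using sumeq by simp
  qed
  moreover have "H 0 = (\<lambda>x. f x * g x)" by (auto simp: H_def F(1) G(1))
  ultimately show ?thesis unfolding sm1_def by blast
qed

lemma sm1_affine: assumes "sm1 f" shows "sm1 (\<lambda>x. f (c * x + a))"
proof -
  obtain F where F: "F 0 = f" "\<And>n x. (F n has_real_derivative F (Suc n) x) (at x)"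
    using assms(1) unfolding sm1_def by blast
  have "((\<lambda>x. c ^ n * F n (c * x + a)) has_real_derivative c ^ Suc n * F (Suc n) (c * x + a)) (at x)" for n x
    apply (rule DERIV_cmult[THEN DERIV_cong])
     apply (rule DERIV_chain2[OF F(2)])
     apply (auto intro!: derivative_eq_intros)
    done
  then show ?thesis unfolding sm1_def
    by (intro exI[of _ "\<lambda>n x. c ^ n * F n (c * x + a)"]) (auto simp: F(1))
qed

fun EP :: "nat \<Rightarrow> real poly" where
  "EP 0 = 1" | "EP (Suc n) = [:0,0,1:] * (EP n - pderiv (EP n))"

definition EF :: "nat \<Rightarrow> real \<Rightarrow> real" where
  "EF n x = (if x > 0 then poly (EP n) (inverse x) * exp (- inverse x) else 0)"

lemma poly_exp_lim: "((\<lambda>t. poly p t / exp t) \<longlongrightarrow> (0::real)) at_top"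
proof -
  have "((\<lambda>t. \<Sum>i\<le>degree p. coeff p i * (t ^ i / exp t)) \<longlongrightarrow> (\<Sum>i\<le>degree p. coeff p i * 0)) at_top"
    by (intro tendsto_sum tendsto_mult tendsto_const tendsto_power_div_exp_0)
  then show ?thesis by (simp add: poly_altdef sum_divide_distrib)
qed

lemma EF_deriv: "(EF n has_real_derivative EF (Suc n) x) (at x)"
proof -
  consider "x > 0" | "x < 0" | "x = 0" by linarith
  then show ?thesis
  proof cases
    case 1
    let ?g = "\<lambda>x. poly (EP n) (inverse x) * exp (- inverse x)"
    have "(?g has_real_derivative EF (Suc n) x) (at x)"
      using 1
    proof -
      have d1: "((\<lambda>x. poly (EP n) (inverse x)) has_real_derivative poly (pderiv (EP n)) (inverse x) * (- (inverse x * inverse x))) (at x)"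
        by (rule DERIV_chain2[OF poly_DERIV]) (use 1 in \<open>auto intro!: derivative_eq_intros simp: power2_eq_square\<close>)
      have d2: "((\<lambda>x. exp (- inverse x)) has_real_derivative exp (- inverse x) * (inverse x * inverse x)) (at x)"
        by (rule DERIV_chain2[OF DERIV_exp]) (use 1 in \<open>auto intro!: derivative_eq_intros simp: power2_eq_square\<close>)
      show ?thesis
        apply (rule DERIV_mult[OF d1 d2, THEN DERIV_cong])
        using 1 by (simp add: EF_def algebra_simps)
    qed
    then show ?thesis
      by (rule has_field_derivative_transform_within_open[where S="{0<..}"]) (use 1 in \<open>auto simp: EF_def\<close>)
  next
    case 2
    have "((\<lambda>x. 0) has_real_derivative 0) (at x)" by simp
    then have "((\<lambda>x. 0) has_real_derivative EF (Suc n) x) (at x)" using 2 by (simp add: EF_def)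
    then show ?thesis
      by (rule has_field_derivative_transform_within_open[where S="{..<0}"]) (use 2 in \<open>auto simp: EF_def\<close>)
  next
    case 3
    have L: "((\<lambda>y. (EF n y - EF n 0) / (y - 0)) \<longlongrightarrow> 0) (at_left 0)"
    proof (rule Lim_transform_eventually[OF tendsto_const])
      show "\<forall>\<^sub>F y in at_left 0. 0 = (EF n y - EF n 0) / (y - 0)"
        by (auto simp: EF_def eventually_at_left_field intro!: exI[of _ "-1"])
    qed
    have R: "((\<lambda>y. (EF n y - EF n 0) / (y - 0)) \<longlongrightarrow> 0) (at_right 0)"
    proof -
      have "((\<lambda>t. poly (EP n * [:0,1:]) t / exp t) \<longlongrightarrow> 0) at_top" by (rule poly_exp_lim)
      then have "((\<lambda>y. poly (EP n * [:0,1:]) (inverse y) / exp (inverse y)) \<longlongrightarrow> 0) (at_right 0)"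
        by (rule filterlim_compose[OF _ filterlim_inverse_at_top_right])
      then show ?thesis
        apply (rule Lim_transform_eventually)
        apply (auto simp: EF_def eventually_at_right_field exp_minus field_simps intro!: exI[of _ 1])
        done
    qed
    have "((\<lambda>y. (EF n y - EF n 0) / (y - 0)) \<longlongrightarrow> 0) (at 0)"
      using L R by (simp add: filterlim_split_at_real)
    then show ?thesis using 3 by (simp add: has_field_derivative_iff EF_def)
  qed
qed

lemma sm1_EF: "sm1 (EF 0)"
  unfolding sm1_def using EF_deriv by blast

lemma sm1_cont: assumes "sm1 f" shows "continuous_on UNIV f"
proof -
  obtain F where F: "F 0 = f" "\<And>n x. (F n has_real_derivative F (Suc n) x) (at x)"
    using assms(1) unfolding sm1_def by blast
  show ?thesis using F by (metis DERIV_isCont continuous_at_imp_continuous_on)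
qed

lemma smooth3_prod:
  assumes "\<And>k. sm1 (p k)"
  shows "smooth3 (\<lambda>x. \<Prod>k\<in>UNIV. p k (x$k))"
proof -
  have "\<forall>k. \<exists>F. F 0 = p k \<and> (\<forall>n x. (F n has_real_derivative F (Suc n) x) (at x))"
    using assms unfolding sm1_def by blast
  then obtain F where F: "\<And>k. F k 0 = p k" "\<And>k n x. (F k n has_real_derivative F k (Suc n) x) (at x)"
    by metis
  define Df where "Df is x = (\<Prod>k\<in>UNIV. F k (count_list is k) (x$k))" for "is" and x :: pt
  have cF: "continuous_on UNIV (F k n)" for k n
    using F(2) by (metis DERIV_isCont continuous_at_imp_continuous_on)
  have "continuous_on UNIV (Df is)" for "is"
    unfolding Df_def
    by (intro continuous_intros continuous_on_compose2[OF cF]) auto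
  moreover have "((\<lambda>t. Df is (x + t *\<^sub>R axis i 1)) has_real_derivative Df (i # is) x) (at 0)" for "is" i x
  proof -
    have eq: "Df is (x + t *\<^sub>R axis i 1) = F i (count_list is i) (x$i + t) * (\<Prod>k\<in>UNIV-{i}. F k (count_list is k) (x$k))" for t
      unfolding Df_def
      by (subst prod.remove[of UNIV i]) (auto simp: axis_def intro!: prod.cong)
    have eq2: "Df (i # is) x = F i (Suc (count_list is i)) (x$i) * (\<Prod>k\<in>UNIV-{i}. F k (count_list is k) (x$k))"
      unfolding Df_def
      by (subst prod.remove[of UNIV i]) (auto intro!: prod.cong)
    have "((\<lambda>t. F i (count_list is i) (x$i + t)) has_real_derivative F i (Suc (count_list is i)) (x$i)) (at 0)"
      by (rule DERIV_chain2[OF F(2), THEN DERIV_cong]) (auto intro!: derivative_eq_intros)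
    then show ?thesis unfolding eq eq2 by (rule DERIV_cmult_right)
  qed
  moreover have "Df [] = (\<lambda>x. \<Prod>k\<in>UNIV. p k (x$k))" by (auto simp: Df_def F(1))
  ultimately show ?thesis unfolding smooth3_def by blast
qed

lemma EF0: "EF 0 x = (if x > 0 then exp (- inverse x) else 0)"
  by (simp add: EF_def)

lemma EF0_bounds: "0 \<le> EF 0 x" "EF 0 x < 1" "EF 0 x > 0 \<longleftrightarrow> x > 0"
  by (auto simp: EF0)

definition psi :: "nat \<Rightarrow> real \<Rightarrow> real \<Rightarrow> real \<Rightarrow> real" where
  "psi m a b x = 1 - (1 - EF 0 (x - a) * EF 0 (b - x)) ^ m"

lemma sm1_power: "sm1 f \<Longrightarrow> sm1 (\<lambda>x. f x ^ m)"
  by (induction m) (auto intro: sm1_mult sm1_const)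

lemma sm1_psi: "sm1 (psi m a b)"
proof -
  have e1: "sm1 (\<lambda>x. EF 0 (1 * x + - a))" by (rule sm1_affine[OF sm1_EF])
  have e2: "sm1 (\<lambda>x. EF 0 ((-1) * x + b))" by (rule sm1_affine[OF sm1_EF])
  have "sm1 (\<lambda>x. 1 + (-1) * (1 + (-1) * (EF 0 (1 * x + - a) * EF 0 ((-1) * x + b))) ^ m)"
    by (intro sm1_add sm1_mult sm1_const sm1_power e1 e2)
  then show ?thesis unfolding psi_def[abs_def] by simp
qed

lemma B_bounds: "0 \<le> EF 0 (x - a) * EF 0 (b - x)" "EF 0 (x - a) * EF 0 (b - x) < 1"
proof -
  show "0 \<le> EF 0 (x - a) * EF 0 (b - x)" using EF0_bounds by simp
  have "EF 0 (x - a) * EF 0 (b - x) \<le> EF 0 (x - a)"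
    using EF0_bounds(1)[of "x-a"] EF0_bounds(2)[of "b-x"] by (simp add: mult_left_le)
  then show "EF 0 (x - a) * EF 0 (b - x) < 1" using EF0_bounds(2)[of "x-a"] by linarith
qed

lemma psi_bounds: "0 \<le> psi m a b x" "psi m a b x \<le> 1"
  unfolding psi_def using B_bounds[of x a b]
  by (auto simp: power_le_one)

lemma psi_out: "\<not> (a < x \<and> x < b) \<Longrightarrow> psi m a b x = 0"
  unfolding psi_def by (auto simp: EF0)

lemma psi_lim: "a < x \<Longrightarrow> x < b \<Longrightarrow> (\<lambda>m. psi m a b x) \<longlonglongrightarrow> 1"
proof -
  assume "a < x" "x < b"
  then have "0 < EF 0 (x - a) * EF 0 (b - x)" using EF0_bounds by simp
  then have "\<bar>1 - EF 0 (x - a) * EF 0 (b - x)\<bar> < 1" using B_bounds[of x a b] by simp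
  then have "(\<lambda>m. (1 - EF 0 (x - a) * EF 0 (b - x)) ^ m) \<longlonglongrightarrow> 0"
    by (rule LIMSEQ_power_zero[where x="1 - _"] | simp add: LIMSEQ_abs_realpow_zero2)+
  then have "(\<lambda>m. 1 - (1 - EF 0 (x - a) * EF 0 (b - x)) ^ m) \<longlonglongrightarrow> 1 - 0"
    by (intro tendsto_diff tendsto_const)
  then show ?thesis by (simp add: psi_def[abs_def])
qed

definition phi :: "nat \<Rightarrow> pt \<Rightarrow> pt \<Rightarrow> pt \<Rightarrow> real" where
  "phi m a b x = (\<Prod>k\<in>UNIV. psi m (a$k) (b$k) (x$k))"

lemma phi_out: "x \<notin> box a b \<Longrightarrow> phi m a b x = 0"
  unfolding phi_def mem_box_cart
  by (auto intro: psi_out)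

lemma phi_bounds: "0 \<le> phi m a b x" "phi m a b x \<le> 1"
  unfolding phi_def using psi_bounds
  by (auto intro!: prod_nonneg prod_le_1)

lemma phi_lim: "(\<lambda>m. phi m a b x) \<longlonglongrightarrow> indicator (box a b) x"
proof (cases "x \<in> box a b")
  case True
  then have "(\<lambda>m. \<Prod>k\<in>UNIV. psi m (a$k) (b$k) (x$k)) \<longlonglongrightarrow> (\<Prod>k\<in>(UNIV::3 set). 1)"
    unfolding mem_box_cart by (intro tendsto_prod psi_lim) auto
  then show ?thesis using True by (simp add: phi_def[abs_def])
next
  case False
  then show ?thesis by (simp add: phi_out)
qed

lemma phi_test: "test_fn UNIV (phi m a b)"
proof -
  have "smooth3 (phi m a b)"
    unfolding phi_def[abs_def] by (rule smooth3_prod[OF sm1_psi])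
  moreover have "{x. phi m a b x \<noteq> 0} \<subseteq> cbox a b"
    using phi_out box_subset_cbox by blast
  then have "closure {x. phi m a b x \<noteq> 0} \<subseteq> cbox a b"
    by (simp add: closure_minimal closed_cbox)
  then have "compact (closure {x. phi m a b x \<noteq> 0})"
    by (meson bounded_cbox bounded_subset compact_closure closure_subset)
  ultimately show ?thesis unfolding test_fn_def by auto
qed



lemma meas_leb: "continuous_on UNIV f \<Longrightarrow> (f::pt \<Rightarrow> real) \<in> borel_measurable lebesgue"
  by (simp add: borel_measurable_continuous_onI measurable_completion)

lemma test_cont: "test_fn S \<phi> \<Longrightarrow> continuous_on UNIV \<phi>"
  unfolding test_fn_def smooth3_def by auto

lemma ind_cbox_int: "integrable lebesgue (indicator (cbox a b) :: pt \<Rightarrow> real)"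
  using lmeasurable_cbox lmeasurable_iff_integrable by blast

lemma abs_le_sq_plus: "\<bar>g * f\<bar> \<le> g\<^sup>2 + i" if "\<bar>f\<bar> \<le> i" "i \<in> {0, 1}" for g f i :: real
proof -
  have "\<bar>g\<bar> \<le> g\<^sup>2 + 1"
  proof (cases "\<bar>g\<bar> \<le> 1")
    case False
    then have "\<bar>g\<bar> * 1 \<le> \<bar>g\<bar> * \<bar>g\<bar>" by (intro mult_left_mono) auto
    then show ?thesis by (simp add: power2_eq_square)
  next
    case True
    then show ?thesis using zero_le_square[of g] unfolding power2_eq_square by linarith
  qed
  moreover have "\<bar>g\<bar> * \<bar>f\<bar> \<le> \<bar>g\<bar> * i" using that by (intro mult_left_mono) auto
  ultimately show ?thesis using that by (auto simp: abs_mult)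
qed

lemma L2_prod_int:
  fixes g f :: "pt \<Rightarrow> real"
  assumes g: "g \<in> borel_measurable lebesgue" "integrable lebesgue (\<lambda>x. (g x)\<^sup>2)"
    and f: "f \<in> borel_measurable lebesgue" "\<And>x. \<bar>f x\<bar> \<le> indicator (cbox a b) x"
  shows "integrable lebesgue (\<lambda>x. g x * f x)"
proof (rule Bochner_Integration.integrable_bound)
  show "integrable lebesgue (\<lambda>x. (g x)\<^sup>2 + indicator (cbox a b) x)"
    by (rule Bochner_Integration.integrable_add[OF g(2) ind_cbox_int])
  show "(\<lambda>x. g x * f x) \<in> borel_measurable lebesgue" using g f by measurable
  show "AE x in lebesgue. norm (g x * f x) \<le> norm ((g x)\<^sup>2 + indicator (cbox a b) x)"
    using abs_le_sq_plus[OF f(2)] by (auto simp: indicator_def)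
qed
lemma phi_meas: "phi m a b \<in> borel_measurable lebesgue"
  by (rule meas_leb[OF test_cont[OF phi_test]])

lemma phi_le: "\<bar>phi m a b x\<bar> \<le> indicator (cbox a b) x"
  using phi_bounds[of m a b x] phi_out[of x a b m] box_subset_cbox[of a b]
  by (auto simp: indicator_def)

lemma box_zero:
  fixes h :: "pt \<Rightarrow> real"
  assumes h: "h \<in> borel_measurable lebesgue" "integrable lebesgue (\<lambda>x. (h x)\<^sup>2)"
    and orth: "\<And>m. integral\<^sup>L lebesgue (\<lambda>x. h x * phi m a b x) = 0"
  shows "integral\<^sup>L lebesgue (\<lambda>x. h x * indicator (box a b) x) = 0"
proof -
  have [measurable]: "box a b \<in> sets lebesgue" "cbox a b \<in> sets lebesgue"
    using lmeasurable_box lmeasurable_cbox fmeasurable_def by blast+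
  have "(\<lambda>m. integral\<^sup>L lebesgue (\<lambda>x. h x * phi m a b x)) \<longlonglongrightarrow> integral\<^sup>L lebesgue (\<lambda>x. h x * indicator (box a b) x)"
  proof (rule integral_dominated_convergence[where w="\<lambda>x. (h x)\<^sup>2 + indicator (cbox a b) x"])
    show "(\<lambda>x. h x * indicator (box a b) x) \<in> borel_measurable lebesgue" using h by measurable
    show "(\<lambda>x. h x * phi m a b x) \<in> borel_measurable lebesgue" for m using h phi_meas by measurable
    show "integrable lebesgue (\<lambda>x. (h x)\<^sup>2 + indicator (cbox a b) x)"
      by (rule Bochner_Integration.integrable_add[OF h(2) ind_cbox_int])
    show "AE x in lebesgue. (\<lambda>m. h x * phi m a b x) \<longlonglongrightarrow> h x * indicator (box a b) x"
      by (intro AE_I2 tendsto_mult tendsto_const phi_lim)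
    show "AE x in lebesgue. norm (h x * phi m a b x) \<le> (h x)\<^sup>2 + indicator (cbox a b) x" for m
      using abs_le_sq_plus[OF phi_le] by (auto simp: indicator_def)
  qed
  then show ?thesis using orth by (simp add: LIMSEQ_const_iff)
qed



lemma box_cover: "(\<Union>i::nat. box (- real i *\<^sub>R One) (real i *\<^sub>R One)) = (UNIV :: pt set)"
proof -
  have "x \<in> box (- real (nat (ceiling (norm x)) + 1) *\<^sub>R One) (real (nat (ceiling (norm x)) + 1) *\<^sub>R One)" for x :: pt
  proof -
    have n: "norm x < real (nat (ceiling (norm x)) + 1)" by linarith
    show ?thesis unfolding mem_box
    proof (intro ballI)
      fix i :: pt assume i: "i \<in> Basis"
      have "\<bar>x \<bullet> i\<bar> \<le> norm x" using Basis_le_norm[OF i] .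
      moreover have "One \<bullet> i = (1::real)" using i by simp
      ultimately show "- real (nat \<lceil>norm x\<rceil> + 1) *\<^sub>R One \<bullet> i < x \<bullet> i \<and>
        x \<bullet> i < real (nat \<lceil>norm x\<rceil> + 1) *\<^sub>R One \<bullet> i"
        using n by (simp add: inner_scaleR_left abs_le_iff) 
    qed
  qed
  note * = this
  show ?thesis
  proof (intro set_eqI iffI)
    fix x :: pt show "x \<in> (\<Union>i::nat. box (- real i *\<^sub>R One) (real i *\<^sub>R One))"
      by (rule UN_I[where a="nat \<lceil>norm x\<rceil> + 1"], rule UNIV_I, rule *[of x])
  qed auto
qed

lemma ae_zero_boxes:
  fixes h :: "pt \<Rightarrow> real"
  assumes hm: "h \<in> borel_measurable lebesgue" and hi: "integrable lebesgue (\<lambda>x. (h x)\<^sup>2)"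
    and hz: "\<And>a b. integral\<^sup>L lebesgue (\<lambda>x. h x * indicator (box a b) x) = 0"
  shows "AE x in lebesgue. h x = 0"
proof -
  obtain h' where h'm[measurable]: "h' \<in> borel_measurable lborel" and ae: "AE x in lborel. h x = h' x"
    using completion_ex_borel_measurable_real[OF hm] by blast
  have h'b[measurable]: "h' \<in> borel_measurable borel" using h'm by simp
  define P where "P X x = h' x * indicator X x" for X x
  have Pm[measurable]: "P (box a b) \<in> borel_measurable lborel" for a b unfolding P_def by measurable
  have boxl[measurable]: "box a b \<in> sets lebesgue" "cbox a b \<in> sets lebesgue" for a b :: pt
    using lmeasurable_box lmeasurable_cbox fmeasurable_def by blast+
  have aeL: "AE x in lebesgue. h x = h' x" using ae by (rule AE_completion)
  have eqL: "AE x in lebesgue. h x * indicator (box a b) x = P (box a b) x" for a b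
    using aeL by eventually_elim (simp add: P_def)
  have intL: "integrable lebesgue (\<lambda>x. h x * indicator (box a b) x)" for a b
    by (rule L2_prod_int[OF hm hi, of _ a b]) (use box_subset_cbox[of a b] in \<open>auto simp: indicator_def\<close>)
  have m1: "P (box a b) \<in> borel_measurable lebesgue" for a b
    using Pm[of a b] by (rule measurable_completion)
  have m0: "(\<lambda>x. h x * indicator (box a b) x) \<in> borel_measurable lebesgue" for a b
    using hm boxl by measurable
  have Pint: "integrable lborel (P (box a b))" for a b
  proof -
    have "integrable lebesgue (P (box a b))"
      using integrable_cong_AE[OF m0 m1 eqL] intL by blast
    then show ?thesis using integrable_completion[OF Pm] by blast
  qed
  have P0: "integral\<^sup>L lborel (P (box a b)) = 0" for a b
  proof -
    have "integral\<^sup>L lborel (P (box a b)) = integral\<^sup>L lebesgue (P (box a b))"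
      using integral_completion[OF Pm] by simp
    also have "\<dots> = integral\<^sup>L lebesgue (\<lambda>x. h x * indicator (box a b) x)"
      using integral_cong_AE[OF m0 m1 eqL] by simp
    finally show ?thesis using hz by simp
  qed
  have pm: "integral\<^sup>L lborel (\<lambda>x. max (P (box a b) x) 0) = integral\<^sup>L lborel (\<lambda>x. max (- P (box a b) x) 0)" for a b
  proof -
    have "integral\<^sup>L lborel (P (box a b)) = integral\<^sup>L lborel (\<lambda>x. max (P (box a b) x) 0 - max (- P (box a b) x) 0)"
      by (rule Bochner_Integration.integral_cong) auto
    also have "\<dots> = integral\<^sup>L lborel (\<lambda>x. max (P (box a b) x) 0) - integral\<^sup>L lborel (\<lambda>x. max (- P (box a b) x) 0)"
      using Pint by (intro Bochner_Integration.integral_diff) auto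
    finally show ?thesis using P0 by simp
  qed
  have Qz: "AE x in lborel. x \<in> box a0 b0 \<longrightarrow> h' x = 0" for a0 b0
  proof -
    let ?Q = "box a0 b0"
    define M1 where "M1 = density lborel (\<lambda>x. ennreal (max (P ?Q x) 0))"
    define M2 where "M2 = density lborel (\<lambda>x. ennreal (max (- P ?Q x) 0))"
    let ?E = "range (\<lambda>(a, b). box a b :: pt set)"
    have em: "emeasure M1 X = ennreal (integral\<^sup>L lborel (\<lambda>x. max (P (?Q \<inter> X) x) 0))"
         "emeasure M2 X = ennreal (integral\<^sup>L lborel (\<lambda>x. max (- P (?Q \<inter> X) x) 0))"
      if "X \<in> ?E" for X
    proof -
      obtain a b where X: "X = box a b" using \<open>X \<in> ?E\<close> by auto
      obtain c d where QX: "?Q \<inter> X = box c d" unfolding X box_Int_box by blast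
      have Xm[measurable]: "X \<in> sets lborel" using X by simp
      have "emeasure M1 X = (\<integral>\<^sup>+ x. ennreal (max (P ?Q x) 0) * indicator X x \<partial>lborel)"
        unfolding M1_def by (rule emeasure_density) (use Xm in \<open>auto simp: P_def\<close>)
      also have "\<dots> = (\<integral>\<^sup>+ x. ennreal (max (P (?Q \<inter> X) x) 0) \<partial>lborel)"
        by (intro nn_integral_cong) (auto simp: P_def indicator_def)
      also have "\<dots> = ennreal (integral\<^sup>L lborel (\<lambda>x. max (P (?Q \<inter> X) x) 0))"
        using Pint[of c d] unfolding QX by (intro nn_integral_eq_integral) auto
      finally show "emeasure M1 X = ennreal (integral\<^sup>L lborel (\<lambda>x. max (P (?Q \<inter> X) x) 0))" .
      have "emeasure M2 X = (\<integral>\<^sup>+ x. ennreal (max (- P ?Q x) 0) * indicator X x \<partial>lborel)"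
        unfolding M2_def by (rule emeasure_density) (use Xm in \<open>auto simp: P_def\<close>)
      also have "\<dots> = (\<integral>\<^sup>+ x. ennreal (max (- P (?Q \<inter> X) x) 0) \<partial>lborel)"
        by (intro nn_integral_cong) (auto simp: P_def indicator_def)
      also have "\<dots> = ennreal (integral\<^sup>L lborel (\<lambda>x. max (- P (?Q \<inter> X) x) 0))"
        using Pint[of c d] unfolding QX by (intro nn_integral_eq_integral) auto
      finally show "emeasure M2 X = ennreal (integral\<^sup>L lborel (\<lambda>x. max (- P (?Q \<inter> X) x) 0))" .
    qed
    have "M1 = M2"
    proof (rule measure_eqI_generator_eq[where E="?E" and \<Omega>=UNIV and A="\<lambda>i. box (- real i *\<^sub>R One) (real i *\<^sub>R One)"])
      show "Int_stable ?E" by (auto simp: Int_stable_def box_Int_box)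
      show "?E \<subseteq> Pow UNIV" by auto
      show "emeasure M1 X = emeasure M2 X" if "X \<in> ?E" for X
      proof -
        obtain a b where X: "X = box a b" using \<open>X \<in> ?E\<close> by auto
        obtain c d where QX: "?Q \<inter> X = box c d" unfolding X box_Int_box by blast
        show ?thesis unfolding em[OF that] QX pm ..
      qed
      have sE: "sets lborel = sigma_sets UNIV ?E"
        by (simp add: borel_eq_box sets_measure_of)
      show "sets M1 = sigma_sets UNIV ?E" unfolding M1_def using sE by simp
      show "sets M2 = sigma_sets UNIV ?E" unfolding M2_def using sE by simp
      show "range (\<lambda>i. box (- real i *\<^sub>R One) (real i *\<^sub>R One)) \<subseteq> ?E" by auto
      show "(\<Union>i. box (- real i *\<^sub>R One) (real i *\<^sub>R One)) = (UNIV :: pt set)" by (rule box_cover)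
      show "emeasure M1 (box (- real i *\<^sub>R One) (real i *\<^sub>R One)) \<noteq> \<infinity>" for i
        by (subst em) auto
    qed
    then have "AE x in lborel. ennreal (max (P ?Q x) 0) = ennreal (max (- P ?Q x) 0)"
      unfolding M1_def M2_def by (intro sigma_finite_measure.density_unique[OF sigma_finite_lborel]) auto
    then show ?thesis
      by eventually_elim (auto simp: P_def max_def split: if_splits)
  qed
  have "AE x in lborel. \<forall>i::nat. x \<in> box (- real i *\<^sub>R One) (real i *\<^sub>R One) \<longrightarrow> h' x = 0"
    using Qz by (intro AE_all_countable[THEN iffD2] allI) blast
  then have "AE x in lborel. h' x = 0"
  proof eventually_elim
    fix x :: pt assume H: "\<forall>i::nat. x \<in> box (- real i *\<^sub>R One) (real i *\<^sub>R One) \<longrightarrow> h' x = 0"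
    have "x \<in> (\<Union>i::nat. box (- real i *\<^sub>R One) (real i *\<^sub>R One))" unfolding box_cover by (rule UNIV_I)
    then obtain i :: nat where "x \<in> box (- real i *\<^sub>R One) (real i *\<^sub>R One)" by (rule UN_E)
    then show "h' x = 0" using H by blast
  qed
  with ae have "AE x in lborel. h x = 0" by (auto elim: AE_mp)
  then show ?thesis by (rule AE_completion)
qed



lemma weak_grad_scale:
  assumes "weak_grad u g"
  shows "weak_grad (\<lambda>x. c * u x) (\<lambda>x. c *\<^sub>R g x)"
proof -
  have gm[measurable]: "g \<in> borel_measurable lebesgue" and gi: "integrable lebesgue (\<lambda>x. (norm (g x))\<^sup>2)"
    and gw: "\<And>\<phi> i. test_fn UNIV \<phi> \<Longrightarrow>
        integral\<^sup>L lebesgue (\<lambda>x. u x * partial i \<phi> x) = - integral\<^sup>L lebesgue (\<lambda>x. g x $ i * \<phi> x)"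
    using assms unfolding weak_grad_def by auto
  have "(\<lambda>x. c *\<^sub>R g x) \<in> borel_measurable lebesgue" by measurable
  moreover have "integrable lebesgue (\<lambda>x. (norm (c *\<^sub>R g x))\<^sup>2)"
    using integrable_mult_left[OF gi, of "c\<^sup>2"] by (simp add: power_mult_distrib)
  moreover have "integral\<^sup>L lebesgue (\<lambda>x. c * u x * partial i \<phi> x) = - integral\<^sup>L lebesgue (\<lambda>x. (c *\<^sub>R g x) $ i * \<phi> x)"
    if "test_fn UNIV \<phi>" for \<phi> i
  proof -
    have "integral\<^sup>L lebesgue (\<lambda>x. c * u x * partial i \<phi> x) = c * integral\<^sup>L lebesgue (\<lambda>x. u x * partial i \<phi> x)"
      by (simp add: mult.assoc)
    also have "\<dots> = - (c * integral\<^sup>L lebesgue (\<lambda>x. g x $ i * \<phi> x))" using gw[OF that] by simp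
    also have "c * integral\<^sup>L lebesgue (\<lambda>x. g x $ i * \<phi> x) = integral\<^sup>L lebesgue (\<lambda>x. (c *\<^sub>R g x) $ i * \<phi> x)"
      by (simp add: mult.assoc)
    finally show ?thesis .
  qed
  ultimately show ?thesis unfolding weak_grad_def by blast
qed

lemma comp_L2:
  fixes g :: "pt \<Rightarrow> real^3" and i :: 3
  assumes gm: "g \<in> borel_measurable lebesgue" and gi: "integrable lebesgue (\<lambda>x. (norm (g x))\<^sup>2)"
  shows "(\<lambda>x. g x $ i) \<in> borel_measurable lebesgue" "integrable lebesgue (\<lambda>x. (g x $ i)\<^sup>2)"
proof -
  have c: "(\<lambda>v::real^3. v $ i) \<in> borel_measurable borel"
    by (intro borel_measurable_continuous_onI continuous_intros)
  show m: "(\<lambda>x. g x $ i) \<in> borel_measurable lebesgue"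
    using measurable_compose[OF gm c] by (simp add: o_def)
  show "integrable lebesgue (\<lambda>x. (g x $ i)\<^sup>2)"
  proof (rule Bochner_Integration.integrable_bound[OF gi])
    show "(\<lambda>x. (g x $ i)\<^sup>2) \<in> borel_measurable lebesgue" using m by measurable
    show "AE x in lebesgue. norm ((g x $ i)\<^sup>2) \<le> norm ((norm (g x))\<^sup>2)"
    proof (intro AE_I2)
      fix x
      have "\<bar>g x $ i\<bar> \<le> norm (g x)" by (rule component_le_norm_cart)
      then have "\<bar>g x $ i\<bar>\<^sup>2 \<le> (norm (g x))\<^sup>2" by (rule power_mono) simp
      then show "norm ((g x $ i)\<^sup>2) \<le> norm ((norm (g x))\<^sup>2)" by simp
    qed
  qed
qed

lemma weak_grad_unique:
  assumes "weak_grad u g1" "weak_grad u g2"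
  shows "AE x in lebesgue. g1 x = g2 x"
proof -
  have g1m[measurable]: "g1 \<in> borel_measurable lebesgue" and g1i: "integrable lebesgue (\<lambda>x. (norm (g1 x))\<^sup>2)"
    and g1w: "\<And>\<phi> i. test_fn UNIV \<phi> \<Longrightarrow>
        integral\<^sup>L lebesgue (\<lambda>x. u x * partial i \<phi> x) = - integral\<^sup>L lebesgue (\<lambda>x. g1 x $ i * \<phi> x)"
    using assms(1) unfolding weak_grad_def by auto
  have g2m[measurable]: "g2 \<in> borel_measurable lebesgue" and g2i: "integrable lebesgue (\<lambda>x. (norm (g2 x))\<^sup>2)"
    and g2w: "\<And>\<phi> i. test_fn UNIV \<phi> \<Longrightarrow>
        integral\<^sup>L lebesgue (\<lambda>x. u x * partial i \<phi> x) = - integral\<^sup>L lebesgue (\<lambda>x. g2 x $ i * \<phi> x)"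
    using assms(2) unfolding weak_grad_def by auto
  have comp: "AE x in lebesgue. g1 x $ i = g2 x $ i" for i
  proof -
    define h where "h x = g1 x $ i - g2 x $ i" for x
    note c1 = comp_L2[OF g1m g1i, of i] and c2 = comp_L2[OF g2m g2i, of i]
    have hm: "h \<in> borel_measurable lebesgue" unfolding h_def using c1 c2 by measurable
    have hi: "integrable lebesgue (\<lambda>x. (h x)\<^sup>2)"
    proof (rule Bochner_Integration.integrable_bound)
      show "integrable lebesgue (\<lambda>x. 2 * (g1 x $ i)\<^sup>2 + 2 * (g2 x $ i)\<^sup>2)"
        using c1(2) c2(2) by (intro Bochner_Integration.integrable_add integrable_mult_right)
      show "(\<lambda>x. (h x)\<^sup>2) \<in> borel_measurable lebesgue" using hm by measurable
      show "AE x in lebesgue. norm ((h x)\<^sup>2) \<le> norm (2 * (g1 x $ i)\<^sup>2 + 2 * (g2 x $ i)\<^sup>2)"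
      proof (intro AE_I2)
        fix x
        have e: "2 * (g1 x $ i)\<^sup>2 + 2 * (g2 x $ i)\<^sup>2 - (g1 x $ i - g2 x $ i)\<^sup>2 = (g1 x $ i + g2 x $ i)\<^sup>2"
          by (simp add: power2_eq_square algebra_simps)
        have "(g1 x $ i - g2 x $ i)\<^sup>2 \<le> 2 * (g1 x $ i)\<^sup>2 + 2 * (g2 x $ i)\<^sup>2"
          using e zero_le_power2[of "g1 x $ i + g2 x $ i"] by linarith
        then show "norm ((h x)\<^sup>2) \<le> norm (2 * (g1 x $ i)\<^sup>2 + 2 * (g2 x $ i)\<^sup>2)"
          by (simp add: h_def)
      qed
    qed
    have orth: "integral\<^sup>L lebesgue (\<lambda>x. h x * phi m a b x) = 0" for m a b
    proof -
      have i1: "integrable lebesgue (\<lambda>x. g1 x $ i * phi m a b x)"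
        by (rule L2_prod_int[OF c1 phi_meas phi_le])
      have i2: "integrable lebesgue (\<lambda>x. g2 x $ i * phi m a b x)"
        by (rule L2_prod_int[OF c2 phi_meas phi_le])
      have "integral\<^sup>L lebesgue (\<lambda>x. h x * phi m a b x) =
            integral\<^sup>L lebesgue (\<lambda>x. g1 x $ i * phi m a b x - g2 x $ i * phi m a b x)"
        by (simp add: h_def algebra_simps)
      also have "\<dots> = integral\<^sup>L lebesgue (\<lambda>x. g1 x $ i * phi m a b x) - integral\<^sup>L lebesgue (\<lambda>x. g2 x $ i * phi m a b x)"
        by (rule Bochner_Integration.integral_diff[OF i1 i2])
      also have "\<dots> = 0" using g1w[OF phi_test, of i m a b] g2w[OF phi_test, of i m a b] by linarith
      finally show ?thesis .
    qed
    have "AE x in lebesgue. h x = 0"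
      by (rule ae_zero_boxes[OF hm hi box_zero[OF hm hi orth]])
    then show ?thesis by eventually_elim (simp add: h_def)
  qed
  have "AE x in lebesgue. \<forall>i. g1 x $ i = g2 x $ i"
    using comp by (intro AE_all_countable[THEN iffD2] allI) blast
  then show ?thesis by eventually_elim (simp add: vec_eq_iff)
qed

lemma dir_nonneg: "0 \<le> dir u"
  unfolding dir_def by (rule integral_nonneg_AE) auto

lemma dir_scale:
  assumes u: "u \<in> D12" and c: "c \<noteq> 0"
  shows "dir (\<lambda>x. c * u x) = c\<^sup>2 * dir u"
proof -
  obtain g where "weak_grad u g" using u unfolding D12_def by blast
  then have wg: "weak_grad u (grad u)" unfolding grad_def by (rule someI[where P="weak_grad _"])
  have "weak_grad (\<lambda>x. c * u x) (\<lambda>x. c *\<^sub>R grad u x)" by (rule weak_grad_scale[OF wg])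
  then have wc: "weak_grad (\<lambda>x. c * u x) (grad (\<lambda>x. c * u x))" unfolding grad_def by (rule someI[where P="weak_grad _"])
  define g2 where "g2 x = (1/c) *\<^sub>R grad (\<lambda>x. c * u x) x" for x
  have "weak_grad (\<lambda>x. (1/c) * (c * u x)) g2" unfolding g2_def by (rule weak_grad_scale[OF wc])
  then have w2: "weak_grad u g2" using c by simp
  have ae: "AE x in lebesgue. grad u x = g2 x" by (rule weak_grad_unique[OF wg w2])
  have m1[measurable]: "grad u \<in> borel_measurable lebesgue" using wg unfolding weak_grad_def by blast
  have m2[measurable]: "g2 \<in> borel_measurable lebesgue" using w2 unfolding weak_grad_def by blast
  have eq: "grad (\<lambda>x. c * u x) x = c *\<^sub>R g2 x" for x using c by (simp add: g2_def)
  have "dir (\<lambda>x. c * u x) = integral\<^sup>L lebesgue (\<lambda>x. c\<^sup>2 * (norm (g2 x))\<^sup>2)"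
    unfolding dir_def eq by (simp add: power_mult_distrib)
  also have "\<dots> = c\<^sup>2 * integral\<^sup>L lebesgue (\<lambda>x. (norm (g2 x))\<^sup>2)" by simp
  also have "integral\<^sup>L lebesgue (\<lambda>x. (norm (g2 x))\<^sup>2) = integral\<^sup>L lebesgue (\<lambda>x. (norm (grad u x))\<^sup>2)"
    by (rule integral_cong_AE) (use ae in \<open>auto elim: AE_mp\<close>)
  finally show ?thesis unfolding dir_def .
qed

lemma D12_scale: assumes "u \<in> D12" shows "(\<lambda>x. c * u x) \<in> D12"
proof -
  obtain g where g: "weak_grad u g" and L: "Lp6 u" using assms unfolding D12_def by blast
  have "Lp6 (\<lambda>x. c * u x)"
  proof -
    have m[measurable]: "u \<in> borel_measurable lebesgue" using L unfolding Lp6_def by blast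
    have i: "integrable lebesgue (\<lambda>x. \<bar>u x\<bar> powr 6)" using L unfolding Lp6_def by blast
    have "integrable lebesgue (\<lambda>x. \<bar>c\<bar> powr 6 * \<bar>u x\<bar> powr 6)" by (rule integrable_mult_right[OF i])
    then have "integrable lebesgue (\<lambda>x. \<bar>c * u x\<bar> powr 6)" by (simp add: abs_mult powr_mult)
    then show ?thesis unfolding Lp6_def by simp
  qed
  then show ?thesis using weak_grad_scale[OF g] unfolding D12_def by blast
qed

lemma EV_scale: assumes "u \<in> EV V" shows "(\<lambda>x. c * u x) \<in> EV V"
proof -
  have "integrable lebesgue (\<lambda>x. c\<^sup>2 * (V x * (u x)\<^sup>2))"
    using assms unfolding EV_def by (intro integrable_mult_right) blast
  then have "integrable lebesgue (\<lambda>x. V x * (c * u x)\<^sup>2)" by (simp add: power_mult_distrib algebra_simps)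
  then show ?thesis using assms D12_scale unfolding EV_def by blast
qed



definition IV :: "fn3 \<Rightarrow> fn3 \<Rightarrow> real" where
  "IV V u = integral\<^sup>L lebesgue (\<lambda>x. V x * (u x)\<^sup>2)"

definition Pint :: "real \<Rightarrow> real \<Rightarrow> pairfn \<Rightarrow> real" where
  "Pint \<alpha> \<beta> z = integral\<^sup>L lebesgue (\<lambda>x. (max (fst z x) 0) powr \<alpha> * (max (snd z x) 0) powr \<beta>)"

lemma IV_nonneg: "(\<forall>x. V x \<ge> 0) \<Longrightarrow> 0 \<le> IV V u"
  unfolding IV_def by (rule integral_nonneg_AE) auto

lemma IV_scale: "IV V (\<lambda>x. c * u x) = c\<^sup>2 * IV V u"
proof -
  have "IV V (\<lambda>x. c * u x) = integral\<^sup>L lebesgue (\<lambda>x. c\<^sup>2 * (V x * (u x)\<^sup>2))"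
    unfolding IV_def by (simp add: power_mult_distrib algebra_simps)
  also have "\<dots> = c\<^sup>2 * IV V u" unfolding IV_def by simp
  finally show ?thesis .
qed

lemma lnorm_alt: "lnorm V W lam z = sqrt (dir (fst z) + dir (snd z) + lam * IV V (fst z) + lam * IV W (snd z))"
  unfolding lnorm_def IV_def ..

lemma lnorm_sq:
  assumes "\<forall>x. V x \<ge> 0" "\<forall>x. W x \<ge> 0" "lam \<ge> 0"
  shows "(lnorm V W lam z)\<^sup>2 = dir (fst z) + dir (snd z) + lam * IV V (fst z) + lam * IV W (snd z)"
    "dir (fst z) \<le> (lnorm V W lam z)\<^sup>2" "dir (snd z) \<le> (lnorm V W lam z)\<^sup>2"
proof -
  have "0 \<le> lam * IV V (fst z)" "0 \<le> lam * IV W (snd z)"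
    using IV_nonneg assms by auto
  moreover note dir_nonneg[of "fst z"] dir_nonneg[of "snd z"]
  ultimately show "(lnorm V W lam z)\<^sup>2 = dir (fst z) + dir (snd z) + lam * IV V (fst z) + lam * IV W (snd z)"
    "dir (fst z) \<le> (lnorm V W lam z)\<^sup>2" "dir (snd z) \<le> (lnorm V W lam z)\<^sup>2"
    unfolding lnorm_alt by simp_all
qed

lemma zscale_EE: "z \<in> EE V W \<Longrightarrow> zscale c z \<in> EE V W"
  unfolding EE_def zscale_def by (auto intro: EV_scale)

lemma EE_D12: "z \<in> EE V W \<Longrightarrow> fst z \<in> D12 \<and> snd z \<in> D12"
  unfolding EE_def EV_def by auto

lemma lnorm_zscale:
  assumes z: "z \<in> EE V W" and c: "c \<noteq> 0"
  shows "lnorm V W lam (zscale c z) = \<bar>c\<bar> * lnorm V W lam z"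
proof -
  have "lnorm V W lam (zscale c z) = sqrt (c\<^sup>2 * (dir (fst z) + dir (snd z) + lam * IV V (fst z) + lam * IV W (snd z)))"
    unfolding lnorm_alt zscale_def using EE_D12[OF z] c
    by (simp add: dir_scale IV_scale algebra_simps)
  also have "\<dots> = \<bar>c\<bar> * lnorm V W lam z"
    unfolding lnorm_alt by (simp add: real_sqrt_mult)
  finally show ?thesis .
qed

lemma max_scale: "c > 0 \<Longrightarrow> max (c * y) 0 = c * max y (0::real)"
  by (auto simp: max_def mult_le_0_iff zero_le_mult_iff)

lemma Pint_scale:
  assumes "c > 0"
  shows "Pint \<alpha> \<beta> (zscale c z) = c powr (\<alpha> + \<beta>) * Pint \<alpha> \<beta> z"
proof -
  have "(max (c * fst z x) 0) powr \<alpha> * (max (c * snd z x) 0) powr \<beta>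
      = c powr (\<alpha> + \<beta>) * ((max (fst z x) 0) powr \<alpha> * (max (snd z x) 0) powr \<beta>)" for x
    using assms by (simp add: max_scale powr_mult powr_add)
  then show ?thesis unfolding Pint_def zscale_def by simp
qed

lemma JT_alt: "JT \<xi> \<alpha> \<beta> V W T b1 b2 lam z =
     1/2 * (lnorm V W lam z)\<^sup>2
     + 1/4 * \<xi> ((lnorm V W lam z)\<^sup>2 / T\<^sup>2) * (b1 * (dir (fst z))\<^sup>2 + b2 * (dir (snd z))\<^sup>2)
     - 1 / (\<alpha> + \<beta>) * Pint \<alpha> \<beta> z"
  unfolding JT_def Pint_def ..

lemma JT_zscale:
  assumes z: "z \<in> EE V W" and c: "c > 0"
  shows "JT \<xi> \<alpha> \<beta> V W T b1 b2 lam (zscale c z) =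
     1/2 * (c\<^sup>2 * (lnorm V W lam z)\<^sup>2)
     + 1/4 * \<xi> (c\<^sup>2 * (lnorm V W lam z)\<^sup>2 / T\<^sup>2) * (b1 * (c\<^sup>2 * dir (fst z))\<^sup>2 + b2 * (c\<^sup>2 * dir (snd z))\<^sup>2)
     - 1 / (\<alpha> + \<beta>) * (c powr (\<alpha> + \<beta>) * Pint \<alpha> \<beta> z)"
proof -
  have "fst (zscale c z) = (\<lambda>x. c * fst z x)" "snd (zscale c z) = (\<lambda>x. c * snd z x)"
    by (simp_all add: zscale_def)
  moreover have "(lnorm V W lam (zscale c z))\<^sup>2 = c\<^sup>2 * (lnorm V W lam z)\<^sup>2"
    using lnorm_zscale[OF z, of c] c by (simp add: power_mult_distrib)
  ultimately show ?thesis
    unfolding JT_alt Pint_scale[OF c] using c EE_D12[OF z]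
    by (simp add: dir_scale power_mult_distrib)
qed



lemma zadd_zscale: "zadd z (zscale t z) = zscale (1 + t) z"
  by (simp add: zadd_def zscale_def algebra_simps)

lemma zscale_one: "zscale 1 z = z"
  by (simp add: zscale_def)

lemma frechet_ray:
  assumes z: "z \<in> EE V W" and F: "is_frechet_deriv V W lam J z L" and pos: "lnorm V W lam z > 0"
  shows "((\<lambda>t. J (zscale (1 + t) z)) has_real_derivative L z) (at 0)"
proof -
  have hom: "\<And>w c. w \<in> EE V W \<Longrightarrow> L (zscale c w) = c * L w"
    and fr: "\<And>\<epsilon>. \<epsilon> > 0 \<Longrightarrow> \<exists>\<delta>>0. \<forall>w\<in>EE V W. lnorm V W lam w < \<delta> \<longrightarrow>
         \<bar>J (zadd z w) - J z - L w\<bar> \<le> \<epsilon> * lnorm V W lam w"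
    using F unfolding is_frechet_deriv_def by blast+
  let ?n = "lnorm V W lam z"
  have "((\<lambda>t. (J (zscale (1 + t) z) - J (zscale (1 + 0) z)) / (t - 0)) \<midarrow>0\<rightarrow> L z)"
    unfolding LIM_eq
  proof (intro allI impI)
    fix r :: real assume r: "r > 0"
    obtain \<delta> where d: "\<delta> > 0" and dH: "\<And>w. w \<in> EE V W \<Longrightarrow> lnorm V W lam w < \<delta> \<Longrightarrow>
         \<bar>J (zadd z w) - J z - L w\<bar> \<le> (r / (2 * ?n)) * lnorm V W lam w"
      using fr[of "r / (2 * ?n)"] r pos by auto
    show "\<exists>s>0. \<forall>t. t \<noteq> 0 \<and> norm (t - 0) < s \<longrightarrow>
            norm ((J (zscale (1 + t) z) - J (zscale (1 + 0) z)) / (t - 0) - L z) < r"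
    proof (intro exI[of _ "\<delta> / ?n"] conjI allI impI)
      show "\<delta> / ?n > 0" using d pos by simp
      fix t :: real assume t: "t \<noteq> 0 \<and> norm (t - 0) < \<delta> / ?n"
      have ln: "lnorm V W lam (zscale t z) = \<bar>t\<bar> * ?n" using lnorm_zscale[OF z] t by simp
      have "\<bar>t\<bar> * ?n < \<delta>" using t pos by (simp add: field_simps)
      then have "lnorm V W lam (zscale t z) < \<delta>" using ln by simp
      from dH[OF zscale_EE[OF z] this]
      have "\<bar>J (zadd z (zscale t z)) - J z - L (zscale t z)\<bar> \<le> (r / (2 * ?n)) * (\<bar>t\<bar> * ?n)"
        unfolding ln .
      then have "\<bar>J (zscale (1 + t) z) - J z - t * L z\<bar> \<le> r / 2 * \<bar>t\<bar>"
        using pos by (simp add: zadd_zscale hom[OF z])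
      then have "\<bar>(J (zscale (1 + t) z) - J z) / t - L z\<bar> \<le> r / 2"
        using t by (simp add: field_simps abs_divide pos_divide_le_eq)
      then show "norm ((J (zscale (1 + t) z) - J (zscale (1 + 0) z)) / (t - 0) - L z) < r"
        using r by (simp add: zscale_one)
    qed
  qed
  then show ?thesis by (simp add: has_field_derivative_iff)
qed

lemma dual_bound:
  assumes z: "z \<in> EE V W" and F: "is_frechet_deriv V W lam J z L" and pos: "lnorm V W lam z > 0"
    and nn: "\<And>w. lnorm V W lam w \<ge> 0"
  shows "\<bar>L z\<bar> \<le> dual_norm V W lam L * lnorm V W lam z"
proof -
  have hom: "\<And>w c. w \<in> EE V W \<Longrightarrow> L (zscale c w) = c * L w"
    using F unfolding is_frechet_deriv_def by blast
  obtain K where K: "\<And>w. w \<in> EE V W \<Longrightarrow> \<bar>L w\<bar> \<le> K * lnorm V W lam w"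
    using F unfolding is_frechet_deriv_def by blast
  let ?n = "lnorm V W lam z"
  let ?w = "zscale (1 / ?n) z"
  have w: "?w \<in> EE V W" by (rule zscale_EE[OF z])
  have lw: "lnorm V W lam ?w = 1" using lnorm_zscale[OF z, of "1 / ?n"] pos by simp
  have bdd: "bdd_above ((\<lambda>w. \<bar>L w\<bar>) ` {w \<in> EE V W. lnorm V W lam w \<le> 1})"
  proof (rule bdd_aboveI2)
    fix w assume "w \<in> {w \<in> EE V W. lnorm V W lam w \<le> 1}"
    then have "\<bar>L w\<bar> \<le> K * lnorm V W lam w" "lnorm V W lam w \<le> 1" "lnorm V W lam w \<ge> 0"
      using K nn by auto
    then have "\<bar>L w\<bar> \<le> K * lnorm V W lam w" "lnorm V W lam w \<le> 1" "lnorm V W lam w \<ge> 0" by auto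
    moreover have "K * lnorm V W lam w \<le> \<bar>K\<bar> * lnorm V W lam w"
      using calculation(3) by (intro mult_right_mono) auto
    moreover have "\<bar>K\<bar> * lnorm V W lam w \<le> \<bar>K\<bar>"
      using calculation(2,3) by (intro mult_left_le) auto
    ultimately show "\<bar>L w\<bar> \<le> \<bar>K\<bar>" by linarith
  qed
  have "\<bar>L ?w\<bar> \<le> dual_norm V W lam L"
    unfolding dual_norm_def using w lw by (intro cSUP_upper[OF _ bdd]) auto
  moreover have "L ?w = L z / ?n" using hom[OF z] by simp
  ultimately have "\<bar>L z\<bar> / ?n \<le> dual_norm V W lam L" using pos by (simp add: abs_divide)
  then show ?thesis using pos by (simp add: pos_divide_le_eq)
qed



lemma G_deriv:
  fixes \<xi> :: "real \<Rightarrow> real" and \<xi>' :: real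
  assumes xd: "(\<xi> has_real_derivative \<xi>') (at (N / T\<^sup>2))" and s: "s > 0"
  shows "((\<lambda>c. 1/2 * (c\<^sup>2 * N) + 1/4 * \<xi> (c\<^sup>2 * N / T\<^sup>2) * (b1 * (c\<^sup>2 * a)\<^sup>2 + b2 * (c\<^sup>2 * b)\<^sup>2)
           - 1 / s * (c powr s * P)) has_real_derivative
     N + 1/4 * (\<xi>' * (2 * N / T\<^sup>2) * (b1 * a\<^sup>2 + b2 * b\<^sup>2) + \<xi> (N / T\<^sup>2) * (4 * (b1 * a\<^sup>2 + b2 * b\<^sup>2))) - P) (at 1)"
proof -
  have qK: "((\<lambda>c. c\<^sup>2 * K) has_real_derivative 2 * K) (at 1)" for K :: real
    by (auto intro!: derivative_eq_intros)
  note q0 = qK[of "N / T\<^sup>2"]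
  have q: "((\<lambda>c. c\<^sup>2 * N / T\<^sup>2) has_real_derivative 2 * N / T\<^sup>2) (at 1)"
    using q0 by simp
  have xd': "(\<xi> has_real_derivative \<xi>') (at (1\<^sup>2 * N / T\<^sup>2))" using xd by simp
  have c1: "((\<lambda>c. \<xi> (c\<^sup>2 * N / T\<^sup>2)) has_real_derivative \<xi>' * (2 * N / T\<^sup>2)) (at 1)"
    by (rule DERIV_chain2[OF xd' q])
  have c2: "((\<lambda>c. b1 * (c\<^sup>2 * a)\<^sup>2 + b2 * (c\<^sup>2 * b)\<^sup>2) has_real_derivative 4 * (b1 * a\<^sup>2 + b2 * b\<^sup>2)) (at 1)"
    by (auto intro!: derivative_eq_intros simp: algebra_simps power2_eq_square)
  have c3: "((\<lambda>c. c powr s * P) has_real_derivative s * P) (at 1)"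
    by (auto intro!: derivative_eq_intros)
  have c0: "((\<lambda>c. 1/2 * (c\<^sup>2 * N)) has_real_derivative N) (at 1)"
    by (auto intro!: derivative_eq_intros)
  have c12: "((\<lambda>c. 1/4 * (\<xi> (c\<^sup>2 * N / T\<^sup>2) * (b1 * (c\<^sup>2 * a)\<^sup>2 + b2 * (c\<^sup>2 * b)\<^sup>2))) has_real_derivative
      1/4 * (\<xi>' * (2 * N / T\<^sup>2) * (b1 * (1\<^sup>2 * a)\<^sup>2 + b2 * (1\<^sup>2 * b)\<^sup>2) + \<xi> (1\<^sup>2 * N / T\<^sup>2) * (4 * (b1 * a\<^sup>2 + b2 * b\<^sup>2)))) (at 1)"
    by (intro DERIV_cmult) (rule DERIV_mult[OF c1 c2, THEN DERIV_cong], simp add: algebra_simps)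
  have "((\<lambda>c. 1/2 * (c\<^sup>2 * N) + 1/4 * (\<xi> (c\<^sup>2 * N / T\<^sup>2) * (b1 * (c\<^sup>2 * a)\<^sup>2 + b2 * (c\<^sup>2 * b)\<^sup>2))
           - 1 / s * (c powr s * P)) has_real_derivative
     N + 1/4 * (\<xi>' * (2 * N / T\<^sup>2) * (b1 * (1\<^sup>2 * a)\<^sup>2 + b2 * (1\<^sup>2 * b)\<^sup>2) + \<xi> (1\<^sup>2 * N / T\<^sup>2) * (4 * (b1 * a\<^sup>2 + b2 * b\<^sup>2))) - 1 / s * (s * P)) (at 1)"
    by (intro DERIV_diff DERIV_add c0 c12 DERIV_cmult c3)
  then show ?thesis using s by (simp add: mult.assoc)
qed

lemma lnorm_nonneg:
  assumes "\<forall>x. V x \<ge> 0" "\<forall>x. W x \<ge> 0" "lam \<ge> 0"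
  shows "0 \<le> lnorm V W lam w"
proof -
  have "0 \<le> lam * IV V (fst w)" "0 \<le> lam * IV W (snd w)"
    using IV_nonneg assms by auto
  then show ?thesis unfolding lnorm_alt using dir_nonneg[of "fst w"] dir_nonneg[of "snd w"] by simp
qed

lemma key:
  fixes \<xi> :: "real \<Rightarrow> real" and \<xi>d :: "nat \<Rightarrow> real \<Rightarrow> real"
  assumes Vn: "\<forall>x. V x \<ge> 0" and Wn: "\<forall>x. W x \<ge> 0" and lam: "lam \<ge> 1" and T: "T > 0"
    and b1: "b1 > 0" and b2: "b2 > 0" and s2: "2 < \<alpha> + \<beta>" and s4: "\<alpha> + \<beta> \<le> 4"
    and xi1: "smooth_real_on_with {0..} \<xi> \<xi>d"
    and xi01: "\<forall>s\<ge>0. 0 \<le> \<xi> s \<and> \<xi> s \<le> 1" and xi2: "\<forall>s\<ge>2. \<xi> s = 0"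
    and xid: "\<forall>s\<ge>0. \<xi>d 1 s \<le> 0"
    and z: "z \<in> EE V W" and F: "is_frechet_deriv V W lam (JT \<xi> \<alpha> \<beta> V W T b1 b2 lam) z L"
    and pos: "lnorm V W lam z > 0"
  shows "(1/2 - 1/(\<alpha> + \<beta>)) * (lnorm V W lam z)\<^sup>2 \<le> JT \<xi> \<alpha> \<beta> V W T b1 b2 lam z
           + dual_norm V W lam L * lnorm V W lam z / (\<alpha> + \<beta>) + 2 * (b1 + b2) * T ^ 4"
proof -
  define J where "J = JT \<xi> \<alpha> \<beta> V W T b1 b2 lam"
  define N where "N = (lnorm V W lam z)\<^sup>2"
  define a where "a = dir (fst z)"
  define b where "b = dir (snd z)"
  define P where "P = Pint \<alpha> \<beta> z"
  define s where "s = \<alpha> + \<beta>"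
  define y0 where "y0 = N / T\<^sup>2"
  define Bq where "Bq = b1 * a\<^sup>2 + b2 * b\<^sup>2"
  define G where "G c = 1/2 * (c\<^sup>2 * N) + 1/4 * \<xi> (c\<^sup>2 * N / T\<^sup>2) * (b1 * (c\<^sup>2 * a)\<^sup>2 + b2 * (c\<^sup>2 * b)\<^sup>2)
           - 1 / s * (c powr s * P)" for c
  define D where "D = N + 1/4 * (\<xi>d 1 y0 * (2 * N / T\<^sup>2) * Bq + \<xi> y0 * (4 * Bq)) - P"
  have s0: "s > 0" using s2 by (simp add: s_def)
  have Npos: "N > 0" using pos by (simp add: N_def)
  have y0pos: "y0 > 0" using Npos T by (simp add: y0_def)
  have lam0: "lam \<ge> 0" using lam by simp
  have aN: "a \<le> N" "b \<le> N" "0 \<le> a" "0 \<le> b"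
    using lnorm_sq[OF Vn Wn lam0, of z] dir_nonneg by (auto simp: N_def a_def b_def)
  have "(\<xi>d 0 has_real_derivative \<xi>d (Suc 0) y0) (at y0 within {0..})"
    using xi1 y0pos unfolding smooth_real_on_with_def by auto
  moreover have "\<xi>d 0 = \<xi>" using xi1 unfolding smooth_real_on_with_def by auto
  moreover have "at y0 within {0..} = at y0"
    by (rule at_within_interior) (use y0pos in auto)
  ultimately have xd: "(\<xi> has_real_derivative \<xi>d 1 y0) (at (N / T\<^sup>2))" by (simp add: y0_def)
  have Gd: "(G has_real_derivative D) (at 1)"
    unfolding G_def[abs_def] D_def Bq_def y0_def by (rule G_deriv[OF xd[unfolded y0_def] s0])
  have Gd0: "((\<lambda>t. G (1 + t)) has_real_derivative D) (at 0)"
  proof -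
    have "(G has_real_derivative D) (at (1 + 0))" using Gd by simp
    have "((\<lambda>t. 1 + t) has_real_derivative 1) (at 0)" by (auto intro!: derivative_eq_intros)
    from DERIV_chain2[where g="\<lambda>t. 1 + t" and x=0, OF \<open>(G has_real_derivative D) (at (1 + 0))\<close> this]
    show ?thesis by simp
  qed
  have JG: "J (zscale c z) = G c" if "c > 0" for c
    unfolding J_def G_def JT_zscale[OF z that] N_def a_def b_def P_def s_def ..
  have fd: "((\<lambda>t. J (zscale (1 + t) z)) has_real_derivative D) (at 0)"
    by (rule has_field_derivative_transform_within_open[OF Gd0, of "{-1<..}"]) (auto simp: JG)
  have fd2: "((\<lambda>t. J (zscale (1 + t) z)) has_real_derivative L z) (at 0)"
    by (rule frechet_ray[OF z F[folded J_def] pos])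
  have LD: "L z = D" using DERIV_unique[OF fd2 fd] .
  have Jz: "J z = G 1" using JG[of 1] by (simp add: zscale_one)
  have G1: "G 1 = N / 2 + \<xi> y0 * Bq / 4 - P / s" by (simp add: G_def y0_def Bq_def)
  have Bq0: "Bq \<ge> 0" using b1 b2 by (simp add: Bq_def)
  have xiB: "\<xi> y0 * Bq \<le> 4 * (b1 + b2) * T ^ 4"
  proof (cases "y0 \<ge> 2")
    case True
    then show ?thesis using xi2 b1 b2 T by simp
  next
    case False
    then have "N < 2 * T\<^sup>2" using T by (simp add: y0_def field_simps)
    then have "N\<^sup>2 \<le> (2 * T\<^sup>2)\<^sup>2" using Npos by (intro power_mono) auto
    moreover have "(2 * T\<^sup>2)\<^sup>2 = 4 * T ^ 4" by (simp add: eval_nat_numeral algebra_simps)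
    ultimately have N2: "N\<^sup>2 \<le> 4 * T ^ 4" by simp
    have "a\<^sup>2 \<le> N\<^sup>2" "b\<^sup>2 \<le> N\<^sup>2" using aN by (auto intro: power_mono)
    then have "Bq \<le> (b1 + b2) * N\<^sup>2"
      unfolding Bq_def using b1 b2
      by (simp add: distrib_right add_mono mult_left_mono)
    also have "\<dots> \<le> (b1 + b2) * (4 * T ^ 4)" using N2 b1 b2 by (intro mult_left_mono) auto
    finally have "Bq \<le> 4 * (b1 + b2) * T ^ 4" by (simp add: algebra_simps)
    moreover have "\<xi> y0 \<le> 1" "0 \<le> \<xi> y0" using xi01 y0pos by auto
    moreover have "\<xi> y0 * Bq \<le> 1 * Bq" using \<open>\<xi> y0 \<le> 1\<close> Bq0 by (rule mult_right_mono)
    ultimately show ?thesis by linarith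
  qed
  have xidy: "\<xi>d 1 y0 \<le> 0" using xid y0pos by auto
  have lastterm: "0 \<le> - \<xi>d 1 y0 * (N / T\<^sup>2) * Bq"
    using xidy Npos T Bq0 by (intro mult_nonneg_nonneg) auto
  have xi0: "0 \<le> \<xi> y0 * Bq" using xi01 y0pos Bq0 by auto
  have coef: "0 \<le> 1/s - 1/4" "1/s - 1/4 \<le> 1/2"
    using s2 s4 by (auto simp: s_def field_simps)
  have "J z - L z / s = (1/2 - 1/s) * N - (1/s - 1/4) * (\<xi> y0 * Bq) + (1 / (2 * s)) * (- \<xi>d 1 y0 * (N / T\<^sup>2) * Bq)"
    unfolding Jz G1 LD D_def using s0 by (simp add: field_simps)
  moreover have "(1/s - 1/4) * (\<xi> y0 * Bq) \<le> 1/2 * (4 * (b1 + b2) * T ^ 4)"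
    by (rule mult_mono) (use coef xiB xi0 in auto)
  moreover have "0 \<le> (1 / (2 * s)) * (- \<xi>d 1 y0 * (N / T\<^sup>2) * Bq)"
    by (rule mult_nonneg_nonneg[OF _ lastterm]) (use s0 in simp)
  ultimately have "(1/2 - 1/s) * N \<le> J z - L z / s + 2 * (b1 + b2) * T ^ 4" by linarith
  moreover have "- L z / s \<le> dual_norm V W lam L * lnorm V W lam z / s"
  proof -
    have "\<bar>L z\<bar> \<le> dual_norm V W lam L * lnorm V W lam z"
      by (rule dual_bound[OF z F pos]) (rule lnorm_nonneg[OF Vn Wn lam0])
    then have "- L z \<le> dual_norm V W lam L * lnorm V W lam z" by linarith
    then have "(- L z) / s \<le> dual_norm V W lam L * lnorm V W lam z / s"
      using s0 by (intro divide_right_mono) auto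
    then show ?thesis by simp
  qed
  ultimately show ?thesis unfolding J_def N_def s_def by (simp add: diff_divide_distrib) 
qed



theorem lemma2p6:
  fixes V W e0 :: fn3 and \<xi> :: "real \<Rightarrow> real" and \<xi>d :: "nat \<Rightarrow> real \<Rightarrow> real"
    and \<alpha> \<beta> bstar D :: real
  assumes alpha: "\<alpha> > 1" and beta: "\<beta> > 1" and ab4: "\<alpha> + \<beta> \<le> 4"
    and H1_V: "continuous_on UNIV V" "\<forall>x. V x \<ge> 0"
    and H1_W: "continuous_on UNIV W" "\<forall>x. W x \<ge> 0"
    and H1_O1: "smooth_boundary (interior (V -` {0}))" "closure (interior (V -` {0})) = V -` {0}"
    and H1_O2: "smooth_boundary (interior (W -` {0}))" "closure (interior (W -` {0})) = W -` {0}"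
    and H1_int: "interior (V -` {0}) \<inter> interior (W -` {0}) \<noteq> {}"
    and H2: "\<exists>c>0. emeasure lebesgue {x. V x * W x \<le> c\<^sup>2} < \<infinity> \<and>
                     emeasure lebesgue {x. V x * W x \<le> c\<^sup>2} > 0"
    and xi: "smooth_real_on_with {0..} \<xi> \<xi>d"
      "\<forall>s\<ge>0. 0 \<le> \<xi> s \<and> \<xi> s \<le> 1" "\<forall>s\<in>{0..1}. \<xi> s = 1" "\<forall>s\<ge>2. \<xi> s = 0"
      "\<forall>s\<ge>0. \<xi>d 1 s \<le> 0" "\<forall>s\<ge>0. \<bar>\<xi>d 1 s\<bar> \<le> 2"
    and e0: "test_fn (interior (V -` {0}) \<inter> interior (W -` {0})) e0" "\<exists>x. e0 x > 0"
    and bstar: "bstar > 0"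
    and e0neg: "\<forall>T>0. \<forall>lam>0. \<forall>b1>0. \<forall>b2>0. b1 + b2 < bstar \<longrightarrow>
                  JT \<xi> \<alpha> \<beta> V W T b1 b2 lam (e0, e0) < 0"
    and D: "D > 0"
    and cD: "\<forall>lam\<ge>1. \<forall>T>0. \<forall>b1>0. \<forall>b2>0. b1 + b2 < bstar \<longrightarrow>
                  cT \<xi> \<alpha> \<beta> V W e0 T b1 b2 lam \<le> D"
  shows "\<exists>bs. 0 < bs \<and> bs < bstar \<and>
     (\<forall>lam\<ge>1. \<forall>b1>0. \<forall>b2>0. b1 + b2 < bs \<longrightarrow>
        (let T = sqrt (2 * (\<alpha> + \<beta>) * (D + 1) / (\<alpha> + \<beta> - 2)) in
         \<forall>z. PS_seq V W lam (JT \<xi> \<alpha> \<beta> V W T b1 b2 lam) (cT \<xi> \<alpha> \<beta> V W e0 T b1 b2 lam) z \<longrightarrow>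
            (\<exists>r :: nat \<Rightarrow> nat. strict_mono r \<and> (\<forall>n. lnorm V W lam (z (r n)) \<le> T))))"
proof -
  define s where "s = \<alpha> + \<beta>"
  have s2: "2 < s" and s4: "s \<le> 4" using alpha beta ab4 by (auto simp: s_def)
  define T where "T = sqrt (2 * (\<alpha> + \<beta>) * (D + 1) / (\<alpha> + \<beta> - 2))"
  define \<kappa> where "\<kappa> = 1/2 - 1/s"
  have kpos: "\<kappa> > 0" using s2 by (simp add: \<kappa>_def field_simps)
  have T2: "T\<^sup>2 = 2 * s * (D + 1) / (s - 2)" using s2 D by (simp add: T_def s_def[symmetric])
  have Tpos: "T > 0" using s2 D by (simp add: T_def s_def[symmetric])
  have kT: "\<kappa> * T\<^sup>2 = D + 1" unfolding T2 \<kappa>_def using s2 by (simp add: field_simps)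
  define bs where "bs = min (bstar / 2) (1 / (8 * T ^ 4))"
  have bs: "0 < bs" "bs < bstar" using bstar Tpos by (auto simp: bs_def)
  have main: "\<exists>r :: nat \<Rightarrow> nat. strict_mono r \<and> (\<forall>n. lnorm V W lam (z (r n)) \<le> T)"
    if lam: "lam \<ge> 1" and b1: "b1 > 0" and b2: "b2 > 0" and bb: "b1 + b2 < bs"
      and PS: "PS_seq V W lam (JT \<xi> \<alpha> \<beta> V W T b1 b2 lam) (cT \<xi> \<alpha> \<beta> V W e0 T b1 b2 lam) z" for lam b1 b2 z
  proof -
    let ?J = "JT \<xi> \<alpha> \<beta> V W T b1 b2 lam"
    let ?c = "cT \<xi> \<alpha> \<beta> V W e0 T b1 b2 lam"
    have zE: "\<And>n. z n \<in> EE V W" and Jc: "(\<lambda>n. ?J (z n)) \<longlonglongrightarrow> ?c"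
      using PS unfolding PS_seq_def by auto
    obtain L where LF: "\<And>n. is_frechet_deriv V W lam ?J (z n) (L n)"
      and Ld: "(\<lambda>n. dual_norm V W lam (L n)) \<longlonglongrightarrow> 0"
      using PS unfolding PS_seq_def by blast
    have cle: "?c \<le> D" using cD lam Tpos b1 b2 bb bs by auto
    have bT: "2 * (b1 + b2) * T ^ 4 \<le> 1/4"
    proof -
      have "b1 + b2 \<le> 1 / (8 * T ^ 4)" using bb by (simp add: bs_def)
      then have "(b1 + b2) * (8 * T ^ 4) \<le> 1" using Tpos by (simp add: pos_le_divide_eq)
      then show ?thesis by (simp add: algebra_simps)
    qed
    define e0' where "e0' = \<kappa> * s * T / (8 * (D + 1))"
    have e0pos: "e0' > 0" using kpos s2 Tpos D by (simp add: e0'_def)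
    have freq: "\<exists>\<^sub>F n in sequentially. lnorm V W lam (z n) \<le> T"
    proof (rule ccontr)
      assume "\<not> (\<exists>\<^sub>F n in sequentially. lnorm V W lam (z n) \<le> T)"
      then have ev1: "\<forall>\<^sub>F n in sequentially. T < lnorm V W lam (z n)"
        by (simp add: not_frequently not_le)
      have ev2: "\<forall>\<^sub>F n in sequentially. ?J (z n) < D + 1/8"
        using order_tendstoD(2)[OF Jc, of "D + 1/8"] cle by simp
      have ev3: "\<forall>\<^sub>F n in sequentially. dual_norm V W lam (L n) < e0'"
        using order_tendstoD(2)[OF Ld e0pos] .
      have "\<forall>\<^sub>F n in sequentially. False"
        using ev1 ev2 ev3
      proof eventually_elim
        case (elim n)
        define l where "l = lnorm V W lam (z n)"
        define d where "d = dual_norm V W lam (L n)"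
        define N where "N = l\<^sup>2"
        have lT: "T < l" using elim by (simp add: l_def)
        have lpos: "l > 0" using lT Tpos by simp
        have K: "\<kappa> * N \<le> ?J (z n) + d * l / s + 2 * (b1 + b2) * T ^ 4"
          unfolding \<kappa>_def N_def l_def d_def s_def
          by (rule key[OF H1_V(2) H1_W(2) lam Tpos b1 b2 _ _ xi(1) xi(2) xi(4) xi(5) zE LF])
             (use s2 s4 lpos in \<open>auto simp: s_def l_def\<close>)
        have NT: "N > T\<^sup>2" unfolding N_def using lT Tpos by (intro power_strict_mono) auto
        have kN: "\<kappa> * N > D + 1" using kT NT kpos by (metis mult_strict_left_mono)
        have lN: "l \<le> N / T" using lT Tpos lpos by (simp add: N_def power2_eq_square field_simps)
        have "d * l / s \<le> e0' * l / s"
          using elim lpos s2 by (intro divide_right_mono mult_right_mono) (auto simp: d_def)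
        also have "\<dots> \<le> e0' * (N / T) / s"
          using lN e0pos s2 by (intro divide_right_mono mult_left_mono) auto
        also have "\<dots> = \<kappa> * N / (8 * (D + 1))"
        proof -
          have "s \<noteq> 0" "T \<noteq> 0" "8 * (D + 1) \<noteq> 0" using Tpos s2 D by auto
          then show ?thesis unfolding e0'_def by (simp add: divide_simps)
        qed
        finally have dl: "d * l / s \<le> \<kappa> * N / (8 * (D + 1))" .
        have "\<kappa> * N < D + 3/8 + \<kappa> * N / (8 * (D + 1))"
          using K dl bT elim by (simp add: l_def)
        moreover have "\<kappa> * N / (8 * (D + 1)) = \<kappa> * N * (1 / (8 * (D + 1)))" by simp
        moreover have "(D + 1) * (1 - 1 / (8 * (D + 1))) < \<kappa> * N * (1 - 1 / (8 * (D + 1)))"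
          using kN D by (intro mult_strict_right_mono) (auto simp: field_simps)
        moreover have "(D + 1) * (1 - 1 / (8 * (D + 1))) = D + 7/8" using D by (simp add: field_simps)
        ultimately show False by (simp add: algebra_simps)
      qed
      then show False by simp
    qed
    then have "infinite {n. lnorm V W lam (z n) \<le> T}"
      by (simp add: frequently_cofinite[symmetric] cofinite_eq_sequentially)
    from infinite_enumerate[OF this] show ?thesis by auto
  qed
  show ?thesis
    unfolding Let_def T_def[symmetric] using bs main by blast
qed


end
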